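(* Let $G$ be a graph of minimum degree at least $2$, and let $\Omega$ be a total $2$-coalition partition of $G$. Then (i) $\Delta(\mathrm{TC}_2\mathrm{G}(G,\Omega))\le \Delta(G)-1$, and (ii) $\beta(\mathrm{TC}_2\mathrm{G}(G,\Omega))\le \delta(G)-1$.
   Context: All graphs are finite, simple and connected. $N(v)$ denotes the open neighborhood of $v$. A set $S\subseteq V(G)$ is a total $2$-dominating set if $|N(v)\cap S|\ge 2$ for every $v\in V(G)$. Two disjoint sets $U,W\subseteq V(G)$ form a total $2$-coalition if neither is a total $2$-dominating set but $U\cup W$ is. A total $2$-coalition partition of $G$ is a partition $\Omega$ of $V(G)$ in which every set forms a total $2$-coalition with some other set of $\Omega$. The total $2$-coalition graph $\mathrm{TC}_2\mathrm{G}(G,\Omega)$ has vertex set $\Omega$, two sets being adjacent if they form a total $2$-coalition in $G$. $\Delta(H)$ is the maximum degree and $\beta(H)$ the vertex cover number of a graph $H$. *)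

theory Defs
  imports Main
begin

definition connected_graph :: "'a set \<Rightarrow> ('a \<Rightarrow> 'a \<Rightarrow> bool) \<Rightarrow> bool" where
  "connected_graph V E \<longleftrightarrow>
     (\<forall>u v. E u v \<longrightarrow> u \<in> V \<and> v \<in> V) \<and>
     (\<forall>u v. E u v \<longrightarrow> E v u) \<and>
     (\<forall>v. \<not> E v v) \<and>
     (\<forall>u\<in>V. \<forall>v\<in>V. E\<^sup>*\<^sup>* u v)"

definition fin_simple_connected_graph :: "'a set \<Rightarrow> ('a \<Rightarrow> 'a \<Rightarrow> bool) \<Rightarrow> bool" where
  "fin_simple_connected_graph V E \<longleftrightarrow> finite V \<and> V \<noteq> {} \<and> connected_graph V E"

definition nbhd :: "'a set \<Rightarrow> ('a \<Rightarrow> 'a \<Rightarrow> bool) \<Rightarrow> 'a \<Rightarrow> 'a set" where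
  "nbhd V E v = {u \<in> V. E v u}"

definition degree :: "'a set \<Rightarrow> ('a \<Rightarrow> 'a \<Rightarrow> bool) \<Rightarrow> 'a \<Rightarrow> nat" where
  "degree V E v = card (nbhd V E v)"

definition max_degree :: "'a set \<Rightarrow> ('a \<Rightarrow> 'a \<Rightarrow> bool) \<Rightarrow> nat" where
  "max_degree V E = Max (degree V E ` V)"

definition min_degree :: "'a set \<Rightarrow> ('a \<Rightarrow> 'a \<Rightarrow> bool) \<Rightarrow> nat" where
  "min_degree V E = Min (degree V E ` V)"

definition is_vertex_cover :: "'a set \<Rightarrow> ('a \<Rightarrow> 'a \<Rightarrow> bool) \<Rightarrow> 'a set \<Rightarrow> bool" where
  "is_vertex_cover V E C \<longleftrightarrow> C \<subseteq> V \<and> (\<forall>u\<in>V. \<forall>v\<in>V. E u v \<longrightarrow> u \<in> C \<or> v \<in> C)"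

definition vertex_cover_number :: "'a set \<Rightarrow> ('a \<Rightarrow> 'a \<Rightarrow> bool) \<Rightarrow> nat" where
  "vertex_cover_number V E = Min (card ` {C. is_vertex_cover V E C})"

definition total_2_dominating :: "'a set \<Rightarrow> ('a \<Rightarrow> 'a \<Rightarrow> bool) \<Rightarrow> 'a set \<Rightarrow> bool" where
  "total_2_dominating V E S \<longleftrightarrow> S \<subseteq> V \<and> (\<forall>v\<in>V. card (nbhd V E v \<inter> S) \<ge> 2)"

definition total_2_coalition :: "'a set \<Rightarrow> ('a \<Rightarrow> 'a \<Rightarrow> bool) \<Rightarrow> 'a set \<Rightarrow> 'a set \<Rightarrow> bool" where
  "total_2_coalition V E U W \<longleftrightarrow>
     U \<inter> W = {} \<and> \<not> total_2_dominating V E U \<and> \<not> total_2_dominating V E W \<and>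
     total_2_dominating V E (U \<union> W)"

definition is_partition :: "'a set \<Rightarrow> 'a set set \<Rightarrow> bool" where
  "is_partition V \<Omega> \<longleftrightarrow> \<Union>\<Omega> = V \<and> {} \<notin> \<Omega> \<and>
     (\<forall>X\<in>\<Omega>. \<forall>Y\<in>\<Omega>. X \<noteq> Y \<longrightarrow> X \<inter> Y = {})"

definition total_2_coalition_partition :: "'a set \<Rightarrow> ('a \<Rightarrow> 'a \<Rightarrow> bool) \<Rightarrow> 'a set set \<Rightarrow> bool" where
  "total_2_coalition_partition V E \<Omega> \<longleftrightarrow> is_partition V \<Omega> \<and>
     (\<forall>X\<in>\<Omega>. \<exists>Y\<in>\<Omega>. Y \<noteq> X \<and> total_2_coalition V E X Y)"

text \<open>The total 2-coalition graph TC2G(G, Omega): vertex set Omega, adjacency relation below.\<close>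
definition tc2g_adj :: "'a set \<Rightarrow> ('a \<Rightarrow> 'a \<Rightarrow> bool) \<Rightarrow> 'a set set \<Rightarrow> 'a set \<Rightarrow> 'a set \<Rightarrow> bool" where
  "tc2g_adj V E \<Omega> X Y \<longleftrightarrow> X \<in> \<Omega> \<and> Y \<in> \<Omega> \<and> X \<noteq> Y \<and> total_2_coalition V E X Y"

end

theory Submission
  imports Defs
begin

lemma sum_card_le:
  assumes "finite A" "finite F" "\<forall>X\<in>F. \<forall>Y\<in>F. X \<noteq> Y \<longrightarrow> X \<inter> Y = {}"
  shows "(\<Sum>Z\<in>F. card (A \<inter> Z)) \<le> card A"
proof -
  have "(\<Sum>Z\<in>F. card (A \<inter> Z)) = card (\<Union>Z\<in>F. A \<inter> Z)"
    using assms by (subst card_UN_disjoint) auto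
  also have "\<dots> \<le> card A" using assms(1) by (intro card_mono) auto
  finally show ?thesis .
qed

lemma part1:
  fixes V :: "'a set" and E :: "'a \<Rightarrow> 'a \<Rightarrow> bool" and \<Omega> :: "'a set set"
  assumes fin: "finite V" and md: "\<forall>v\<in>V. degree V E v \<ge> 2"
    and P: "total_2_coalition_partition V E \<Omega>" and X: "X \<in> \<Omega>"
  shows "\<exists>v\<in>V. degree \<Omega> (tc2g_adj V E \<Omega>) X \<le> degree V E v - 1"
proof -
  have part: "is_partition V \<Omega>" using P unfolding total_2_coalition_partition_def by blast
  have sub: "\<forall>Z\<in>\<Omega>. Z \<subseteq> V" using part unfolding is_partition_def by blast
  have disj: "\<forall>Y\<in>\<Omega>. \<forall>Z\<in>\<Omega>. Y \<noteq> Z \<longrightarrow> Y \<inter> Z = {}" using part unfolding is_partition_def by blast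
  have finO: "finite \<Omega>" using part fin unfolding is_partition_def
    by (metis Sup_upper finite_Pow_iff finite_subset subsetI PowI)
  obtain Y0 where "Y0 \<in> \<Omega>" "total_2_coalition V E X Y0" using P X unfolding total_2_coalition_partition_def by blast
  then have "\<not> total_2_dominating V E X" unfolding total_2_coalition_def by blast
  then obtain v where v: "v \<in> V" "card (nbhd V E v \<inter> X) < 2"
    using sub X unfolding total_2_dominating_def by force
  define A where "A = nbhd V E v"
  define N where "N = {Y\<in>\<Omega>. tc2g_adj V E \<Omega> X Y}"
  define c where "c = card (A \<inter> X)"
  define d where "d = degree V E v"
  have finA: "finite A" unfolding A_def nbhd_def using fin by auto
  have dA: "d = card A" unfolding d_def degree_def A_def ..
  have d2: "d \<ge> 2" using md v unfolding d_def by blast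
  have c2: "c < 2" using v(2) by (simp add: c_def A_def)
  have XN: "X \<notin> N" unfolding N_def tc2g_adj_def by blast
  have NO: "N \<subseteq> \<Omega>" unfolding N_def by blast
  have finN: "finite N" using finO NO finite_subset by blast
  have "(\<Sum>Z\<in>insert X N. card (A \<inter> Z)) \<le> card A"
    using sum_card_le[OF finA, of "insert X N"] finN NO X disj by blast
  then have S: "c + (\<Sum>Z\<in>N. card (A \<inter> Z)) \<le> d"
    using finN XN unfolding c_def dA by simp
  have each: "\<forall>Y\<in>N. 2 - c \<le> card (A \<inter> Y)"
  proof
    fix Y assume Y: "Y \<in> N"
    then have co: "total_2_coalition V E X Y" unfolding N_def tc2g_adj_def by blast
    then have "X \<inter> Y = {}" "total_2_dominating V E (X \<union> Y)" unfolding total_2_coalition_def by blast+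
    then have "2 \<le> card (A \<inter> (X \<union> Y))" using v(1) unfolding total_2_dominating_def A_def
      by (simp add: Int_commute)
    moreover have "card (A \<inter> (X \<union> Y)) = card (A \<inter> X) + card (A \<inter> Y)"
      using \<open>X \<inter> Y = {}\<close> finA by (subst Int_Un_distrib) (rule card_Un_disjoint, auto)
    ultimately show "2 - c \<le> card (A \<inter> Y)" unfolding c_def by simp
  qed
  have "card N * (2 - c) \<le> (\<Sum>Z\<in>N. card (A \<inter> Z))"
    using sum_bounded_below[of N "2 - c" "\<lambda>Z. card (A \<inter> Z)"] each by simp
  with S have "c + card N * (2 - c) \<le> d" by simp
  with c2 d2 have "card N \<le> d - 1"
    by (cases "c = 0") (auto simp: less_2_cases_iff)
  moreover have "degree \<Omega> (tc2g_adj V E \<Omega>) X = card N"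
    unfolding degree_def nbhd_def N_def ..
  ultimately show ?thesis using v(1) unfolding d_def by auto
qed

theorem lemma3p4:
  fixes V :: "'a set" and E :: "'a \<Rightarrow> 'a \<Rightarrow> bool" and \<Omega> :: "'a set set"
  assumes "fin_simple_connected_graph V E"
    and "min_degree V E \<ge> 2"
    and "total_2_coalition_partition V E \<Omega>"
  shows "max_degree \<Omega> (tc2g_adj V E \<Omega>) \<le> max_degree V E - 1 \<and>
         vertex_cover_number \<Omega> (tc2g_adj V E \<Omega>) \<le> min_degree V E - 1"
proof -
  have fin: "finite V" and ne: "V \<noteq> {}" using assms(1) unfolding fin_simple_connected_graph_def by auto
  have md: "\<forall>v\<in>V. degree V E v \<ge> 2"
  proof
    fix v assume "v \<in> V"
    have "Min (degree V E ` V) \<le> degree V E v" using fin \<open>v \<in> V\<close> by (intro Min_le) auto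
    then show "degree V E v \<ge> 2" using assms(2) unfolding min_degree_def by linarith
  qed
  have part: "is_partition V \<Omega>" using assms(3) unfolding total_2_coalition_partition_def by blast
  have sub: "\<forall>Z\<in>\<Omega>. Z \<subseteq> V" using part unfolding is_partition_def by blast
  have disj: "\<forall>Y\<in>\<Omega>. \<forall>Z\<in>\<Omega>. Y \<noteq> Z \<longrightarrow> Y \<inter> Z = {}" using part unfolding is_partition_def by blast
  have finO: "finite \<Omega>" using part fin unfolding is_partition_def
    by (metis Sup_upper finite_Pow_iff finite_subset subsetI PowI)
  have neO: "\<Omega> \<noteq> {}" using part ne unfolding is_partition_def by auto
  have P1: "max_degree \<Omega> (tc2g_adj V E \<Omega>) \<le> max_degree V E - 1"
  proof -
    have "\<forall>X\<in>\<Omega>. degree \<Omega> (tc2g_adj V E \<Omega>) X \<le> max_degree V E - 1"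
    proof
      fix X assume "X \<in> \<Omega>"
      then obtain v where "v \<in> V" "degree \<Omega> (tc2g_adj V E \<Omega>) X \<le> degree V E v - 1"
        using part1[OF fin md assms(3)] by blast
      moreover have "degree V E v \<le> max_degree V E"
        unfolding max_degree_def using fin \<open>v \<in> V\<close> by simp
      ultimately show "degree \<Omega> (tc2g_adj V E \<Omega>) X \<le> max_degree V E - 1" by linarith
    qed
    then show ?thesis unfolding max_degree_def using finO neO by simp
  qed
  have "Min (degree V E ` V) \<in> degree V E ` V" using fin ne by (intro Min_in) auto
  then obtain v where v: "v \<in> V" "degree V E v = min_degree V E"
    unfolding min_degree_def by auto
  define A where "A = nbhd V E v"
  define \<delta> where "\<delta> = min_degree V E"
  have finA: "finite A" unfolding A_def nbhd_def using fin by auto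
  have dA: "\<delta> = card A" using v(2) unfolding \<delta>_def degree_def A_def by simp
  define C where "C = {Z\<in>\<Omega>. A \<inter> Z \<noteq> {}}"
  have CO: "C \<subseteq> \<Omega>" unfolding C_def by blast
  have finC: "finite C" using finO CO finite_subset by blast
  have S: "(\<Sum>Z\<in>C. card (A \<inter> Z)) \<le> \<delta>"
    using sum_card_le[OF finA finC] CO disj dA by blast
  have cardpos: "\<forall>Z\<in>C. 1 \<le> card (A \<inter> Z)" unfolding C_def using finA
    by (simp add: Suc_le_eq card_gt_0_iff)
  have edge2: "2 \<le> card (A \<inter> X) + card (A \<inter> Y)" if "tc2g_adj V E \<Omega> X Y" for X Y
  proof -
    have "X \<inter> Y = {}" "total_2_dominating V E (X \<union> Y)"
      using that unfolding tc2g_adj_def total_2_coalition_def by blast+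
    then have "2 \<le> card (A \<inter> (X \<union> Y))" using v(1) unfolding total_2_dominating_def A_def
      by (simp add: Int_commute)
    moreover have "card (A \<inter> (X \<union> Y)) = card (A \<inter> X) + card (A \<inter> Y)"
      using \<open>X \<inter> Y = {}\<close> finA by (subst Int_Un_distrib) (rule card_Un_disjoint, auto)
    ultimately show ?thesis by simp
  qed
  have VCle: "vertex_cover_number \<Omega> (tc2g_adj V E \<Omega>) \<le> card D"
    if "is_vertex_cover \<Omega> (tc2g_adj V E \<Omega>) D" for D
  proof -
    have "{C. is_vertex_cover \<Omega> (tc2g_adj V E \<Omega>) C} \<subseteq> Pow \<Omega>"
      unfolding is_vertex_cover_def by blast
    then have "finite {C. is_vertex_cover \<Omega> (tc2g_adj V E \<Omega>) C}"
      using finO finite_subset by blast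
    then show ?thesis unfolding vertex_cover_number_def using that by simp
  qed
  have P2: "vertex_cover_number \<Omega> (tc2g_adj V E \<Omega>) \<le> \<delta> - 1"
  proof (cases "\<exists>Z\<in>C. 2 \<le> card (A \<inter> Z)")
    case True
    then obtain Z where Z: "Z \<in> C" "2 \<le> card (A \<inter> Z)" by blast
    have "(\<Sum>Z\<in>C. card (A \<inter> Z)) = card (A \<inter> Z) + (\<Sum>Z\<in>C - {Z}. card (A \<inter> Z))"
      using finC Z(1) by (simp add: sum.remove)
    moreover have "card (C - {Z}) \<le> (\<Sum>Z\<in>C - {Z}. card (A \<inter> Z))"
      using sum_bounded_below[of "C - {Z}" 1 "\<lambda>Z. card (A \<inter> Z)"] cardpos by simp
    moreover have "card (C - {Z}) = card C - 1" using Z(1) finC by simp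
    moreover have "card C \<ge> 1" using Z(1) finC by (auto simp: Suc_le_eq card_gt_0_iff)
    ultimately have "card C \<le> \<delta> - 1" using S Z(2) by linarith
    moreover have "is_vertex_cover \<Omega> (tc2g_adj V E \<Omega>) C"
      unfolding is_vertex_cover_def
    proof (intro conjI CO ballI impI)
      fix X Y assume "X \<in> \<Omega>" "Y \<in> \<Omega>" "tc2g_adj V E \<Omega> X Y"
      then have h: "2 \<le> card (A \<inter> X) + card (A \<inter> Y)" "X \<in> \<Omega>" "Y \<in> \<Omega>" using edge2[of X Y] by blast+
      show "X \<in> C \<or> Y \<in> C"
      proof (rule ccontr)
        assume "\<not> (X \<in> C \<or> Y \<in> C)"
        then have "A \<inter> X = {}" "A \<inter> Y = {}" using h(2,3) unfolding C_def by blast+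
        then show False using h(1) by simp
      qed
    qed
    ultimately show ?thesis using VCle by (meson order_trans)
  next
    case False
    have "card C \<le> \<delta>"
      using sum_bounded_below[of C 1 "\<lambda>Z. card (A \<inter> Z)"] cardpos S by simp
    define Z0 where "Z0 = (SOME Z. Z \<in> C)"
    have "card (C - {Z0}) \<le> \<delta> - 1"
    proof (cases "C = {}")
      case True then show ?thesis by simp
    next
      case False
      then have "Z0 \<in> C" unfolding Z0_def by (simp add: some_in_eq)
      then show ?thesis using finC \<open>card C \<le> \<delta>\<close> by simp
    qed
    moreover have "is_vertex_cover \<Omega> (tc2g_adj V E \<Omega>) (C - {Z0})"
      unfolding is_vertex_cover_def
    proof (intro conjI ballI impI)
      show "C - {Z0} \<subseteq> \<Omega>" using CO by blast
      fix X Y assume XY: "X \<in> \<Omega>" "Y \<in> \<Omega>" "tc2g_adj V E \<Omega> X Y"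
      have le1: "card (A \<inter> W) \<le> 1" if "W \<in> \<Omega>" for W
      proof (cases "A \<inter> W = {}")
        case True then show ?thesis by simp
      next
        case F2: False
        then have "W \<in> C" using that unfolding C_def by blast
        then show ?thesis using False by (metis not_less_eq_eq numeral_2_eq_2 One_nat_def)
      qed
      have "card (A \<inter> X) = 1" "card (A \<inter> Y) = 1"
        using edge2[OF XY(3)] le1[OF XY(1)] le1[OF XY(2)] by linarith+
      then have "X \<in> C" "Y \<in> C" using XY unfolding C_def by (auto simp del: One_nat_def)
      moreover have "X \<noteq> Y" using XY(3) unfolding tc2g_adj_def by blast
      ultimately show "X \<in> C - {Z0} \<or> Y \<in> C - {Z0}" by blast
    qed
    ultimately show ?thesis using VCle by (meson order_trans)
  qed
  show ?thesis using P1 P2 unfolding \<delta>_def by blast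
qed

end
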